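(* Let $X$ be a nonreflexive real Banach space, and consider $X\oplus\mathbb R$ equipped with the maximum norm $\|(x,t)\|=\max\{\|x\|,|t|\}$, identifying $x\in X$ with $(x,0)\in X\oplus\mathbb R$. Then there exists a nonempty bounded convex set $C\subset X\oplus\mathbb R$ such that (a) $\varphi(x):=\operatorname{dist}(x,C)>0$ for every $x\in X$ (distance taken in $X\oplus\mathbb R$), and (b) for each $\varepsilon>0$ there is a set $M_\varepsilon\subset X$ with $\operatorname{diam} M_\varepsilon<\varepsilon$ and $\inf \varphi(M_\varepsilon)=0$. *)

theory Defs
  imports "HOL-Analysis.Analysis"
begin

definition reflexive_space :: "'a::real_normed_vector itself \<Rightarrow> bool" where
  "reflexive_space _ \<longleftrightarrow>
     (\<forall>\<Phi> :: ('a \<Rightarrow>\<^sub>L real) \<Rightarrow>\<^sub>L real. \<exists>x::'a. \<forall>f. blinfun_apply \<Phi> f = blinfun_apply f x)"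

definition maxnorm :: "'a::real_normed_vector \<times> real \<Rightarrow> real" where
  "maxnorm p = max (norm (fst p)) \<bar>snd p\<bar>"

definition maxdist :: "'a::real_normed_vector \<times> real \<Rightarrow> ('a \<times> real) set \<Rightarrow> real" where
  "maxdist p C = Inf ((\<lambda>c. maxnorm (p - c)) ` C)"

definition maxbounded :: "('a::real_normed_vector \<times> real) set \<Rightarrow> bool" where
  "maxbounded C \<longleftrightarrow> (\<exists>B. \<forall>c\<in>C. maxnorm c \<le> B)"

end

theory Submission
  imports Defs
begin


definition sublin :: "('e::real_vector \<Rightarrow> real) \<Rightarrow> bool" where
 "sublin p \<longleftrightarrow> (\<forall>x y. p (x+y) \<le> p x + p y) \<and> (\<forall>c x. c \<ge> 0 \<longrightarrow> p (c *\<^sub>R x) = c * p x)"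

definition ext_graph :: "('e::real_vector \<Rightarrow> real) \<Rightarrow> ('e \<times> real) set \<Rightarrow> ('e \<times> real) set \<Rightarrow> bool" where
 "ext_graph p H0 H \<longleftrightarrow> subspace H \<and> H0 \<subseteq> H \<and> (\<forall>x a b. (x,a)\<in>H \<longrightarrow> (x,b)\<in>H \<longrightarrow> a = b)
     \<and> (\<forall>x a. (x,a)\<in>H \<longrightarrow> a \<le> p x)"

lemma sub_add: "subspace H \<Longrightarrow> (x,a)\<in>H \<Longrightarrow> (y,b)\<in>H \<Longrightarrow> (x+y,a+b)\<in>H"
  using subspace_add[of H "(x,a)" "(y,b)"] by simp
lemma sub_scale: "subspace H \<Longrightarrow> (x,a)\<in>H \<Longrightarrow> (c *\<^sub>R x, c*a)\<in>H"
  using subspace_mul[of H "(x,a)" c] by simp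
lemma sub_zero: "subspace H \<Longrightarrow> (0,0)\<in>H"
  using subspace_0[of H] by (simp add: zero_prod_def)

lemma one_step:
  assumes p: "sublin p" and E: "ext_graph p H0 H" and z: "z \<notin> fst ` H"
  shows "\<exists>H'. ext_graph p H0 H' \<and> H \<subset> H'"
proof -
  have sH: "subspace H" and fnc: "\<And>x a b. (x,a)\<in>H \<Longrightarrow> (x,b)\<in>H \<Longrightarrow> a = b"
    and dom: "\<And>x a. (x,a)\<in>H \<Longrightarrow> a \<le> p x" and H0: "H0 \<subseteq> H"
    using E unfolding ext_graph_def by auto
  have padd: "\<And>x y. p (x+y) \<le> p x + p y" and pscale: "\<And>c x. c \<ge> 0 \<Longrightarrow> p (c *\<^sub>R x) = c * p x"
    using p unfolding sublin_def by auto
  have key: "a - p (x - z) \<le> p (y + z) - b" if "(x,a)\<in>H" "(y,b)\<in>H" for x a y b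
  proof -
    have "(x+y, a+b) \<in> H" using sub_add[OF sH that] .
    then have "a + b \<le> p (x+y)" by (rule dom)
    also have "x + y = (x - z) + (y + z)" by simp
    also have "p ((x - z) + (y + z)) \<le> p (x - z) + p (y + z)" by (rule padd)
    finally show ?thesis by simp
  qed
  define A where "A = {a - p (x - z) | x a. (x,a)\<in>H}"
  define c where "c = Sup A"
  have 00: "(0,0) \<in> H" by (rule sub_zero[OF sH])
  have Ane: "A \<noteq> {}" unfolding A_def using 00 by blast
  have Abd: "bdd_above A" unfolding A_def bdd_above_def using key[OF _ 00] by fastforce
  have c1: "a - p (x - z) \<le> c" if "(x,a)\<in>H" for x a
    unfolding c_def by (rule cSup_upper[OF _ Abd]) (use that A_def in blast)
  have c2: "c \<le> p (y + z) - b" if "(y,b)\<in>H" for y b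
    unfolding c_def by (rule cSup_least[OF Ane]) (use key that A_def in blast)
  define H' where "H' = {(x + t *\<^sub>R z, a + t*c) | x a t. (x,a)\<in>H}"
  have zH: "(w, b)\<in>H \<Longrightarrow> w \<noteq> z" for w b using z by force
  have sH': "subspace H'"
    unfolding subspace_def
  proof (intro conjI ballI allI)
    show "0 \<in> H'" unfolding H'_def using 00 by (auto simp: zero_prod_def intro!: exI[of _ 0])
  next
    fix u v assume "u \<in> H'" "v \<in> H'"
    then obtain x a t y b s where u: "u = (x + t *\<^sub>R z, a + t*c)" "(x,a)\<in>H"
      and v: "v = (y + s *\<^sub>R z, b + s*c)" "(y,b)\<in>H" unfolding H'_def by blast
    have "((x+y) + (t+s) *\<^sub>R z, (a+b) + (t+s)*c) \<in> H'"
      unfolding H'_def using sub_add[OF sH u(2) v(2)] by blast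
    moreover have "u + v = ((x+y) + (t+s) *\<^sub>R z, (a+b) + (t+s)*c)"
      using u v by (simp add: algebra_simps scaleR_add_left)
    ultimately show "u + v \<in> H'" by simp
  next
    fix r :: real and u assume "u \<in> H'"
    then obtain x a t where u: "u = (x + t *\<^sub>R z, a + t*c)" "(x,a)\<in>H" unfolding H'_def by blast
    have "(r *\<^sub>R x + (r*t) *\<^sub>R z, r*a + (r*t)*c) \<in> H'"
      unfolding H'_def using sub_scale[OF sH u(2)] by blast
    moreover have "r *\<^sub>R u = (r *\<^sub>R x + (r*t) *\<^sub>R z, r*a + (r*t)*c)"
      using u by (simp add: algebra_simps scaleR_add_right)
    ultimately show "r *\<^sub>R u \<in> H'" by simp
  qed
  have HH': "H \<subseteq> H'"
  proof
    fix u assume "u \<in> H"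
    then show "u \<in> H'"
    proof (cases u)
      case (Pair a b)
      have "(a + 0 *\<^sub>R z, b + 0*c) \<in> H'" unfolding H'_def using \<open>u \<in> H\<close> Pair by blast
      then show ?thesis using Pair by simp
    qed
  qed
  have fun': "a1 = a2" if h1: "(w,a1)\<in>H'" and h2: "(w,a2)\<in>H'" for w a1 a2
  proof -
    obtain x a t where 1: "w = x + t *\<^sub>R z" "a1 = a + t*c" "(x,a)\<in>H" using h1 unfolding H'_def by blast
    obtain y b s where 2: "w = y + s *\<^sub>R z" "a2 = b + s*c" "(y,b)\<in>H" using h2 unfolding H'_def by blast
    show ?thesis
    proof (cases "t = s")
      case True
      then have "x = y" using 1 2 by simp
      then show ?thesis using 1 2 True fnc by auto
    next
      case False
      have "(x - y, a - b) \<in> H" using sub_add[OF sH 1(3) sub_scale[OF sH 2(3), of "-1"]] by simp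
      from sub_scale[OF sH this, of "1/(s-t)"]
      have "((1/(s-t)) *\<^sub>R (x - y), (1/(s-t))*(a-b)) \<in> H" .
      moreover have "(1/(s-t)) *\<^sub>R (x - y) = z"
      proof -
        have "x - y = (s - t) *\<^sub>R z" using 1(1) 2(1) by (simp add: algebra_simps)
        then show ?thesis using False by simp
      qed
      ultimately show ?thesis using zH by fastforce
    qed
  qed
  have dom': "b \<le> p w" if h: "(w,b)\<in>H'" for w b
  proof -
    obtain x a t where 1: "w = x + t *\<^sub>R z" "b = a + t*c" "(x,a)\<in>H" using h unfolding H'_def by blast
    consider "t = 0" | "t > 0" | "t < 0" by linarith
    then show ?thesis
    proof cases
      case 1 then show ?thesis using \<open>w = _\<close> \<open>b = _\<close> dom[OF \<open>(x,a)\<in>H\<close>] by simp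
    next
      case 2
      have "((1/t) *\<^sub>R x, (1/t)*a) \<in> H" using sub_scale[OF sH 1(3)] .
      from c2[OF this] have "c \<le> p ((1/t) *\<^sub>R x + z) - a/t" by simp
      moreover have "(1/t) *\<^sub>R x + z = (1/t) *\<^sub>R (x + t *\<^sub>R z)" using 2 by (simp add: algebra_simps)
      moreover have "p ((1/t) *\<^sub>R (x + t *\<^sub>R z)) = (1/t) * p (x + t *\<^sub>R z)" using 2 pscale by simp
      ultimately have "c \<le> (1/t) * p (x + t *\<^sub>R z) - a/t" by simp
      then have "t * c \<le> p (x + t *\<^sub>R z) - a" using 2 by (simp add: field_simps)
      then show ?thesis using 1 by simp
    next
      case 3
      define s where "s = -t"
      have s: "s > 0" using 3 s_def by simp
      have "((1/s) *\<^sub>R x, (1/s)*a) \<in> H" using sub_scale[OF sH 1(3)] .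
      from c1[OF this] have "a/s - p ((1/s) *\<^sub>R x - z) \<le> c" by simp
      moreover have "(1/s) *\<^sub>R x - z = (1/s) *\<^sub>R (x + t *\<^sub>R z)" using s s_def by (simp add: algebra_simps)
      moreover have "p ((1/s) *\<^sub>R (x + t *\<^sub>R z)) = (1/s) * p (x + t *\<^sub>R z)" using s pscale by simp
      ultimately have "a/s - (1/s) * p (x + t *\<^sub>R z) \<le> c" by simp
      then have "a - p (x + t *\<^sub>R z) \<le> s * c" using s by (simp add: field_simps)
      then show ?thesis using 1 s_def by simp
    qed
  qed
  have "(z, c) \<in> H'" unfolding H'_def
    by (rule CollectI, rule exI[where x=0], rule exI[where x=0], rule exI[where x="1::real"]) (simp add: 00)
  moreover have "(z, c) \<notin> H" using zH by blast
  ultimately have "H \<subset> H'" using HH' by blast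
  moreover have "ext_graph p H0 H'" unfolding ext_graph_def using sH' H0 HH' fun' dom' by blast
  ultimately show ?thesis by blast
qed

lemma HB_graph:
  assumes p: "sublin p" and sH0: "subspace H0"
    and fn0: "\<And>x a b. (x,a)\<in>H0 \<Longrightarrow> (x,b)\<in>H0 \<Longrightarrow> a = b"
    and dom0: "\<And>x a. (x,a)\<in>H0 \<Longrightarrow> a \<le> p x"
  shows "\<exists>G. linear G \<and> (\<forall>x a. (x,a)\<in>H0 \<longrightarrow> G x = a) \<and> (\<forall>x. G x \<le> p x)"
proof -
  define A where "A = {H. ext_graph p H0 H}"
  have H0A: "H0 \<in> A" unfolding A_def ext_graph_def using sH0 fn0 dom0 by blast
  have "\<forall>C\<in>chains A. \<exists>U\<in>A. \<forall>X\<in>C. X \<subseteq> U"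
  proof
    fix C assume C: "C \<in> chains A"
    show "\<exists>U\<in>A. \<forall>X\<in>C. X \<subseteq> U"
    proof (cases "C = {}")
      case True then show ?thesis using H0A by blast
    next
      case False
      have CA: "\<And>X. X \<in> C \<Longrightarrow> ext_graph p H0 X" using C unfolding chains_def A_def by blast
      have cmp: "\<And>X Y. X \<in> C \<Longrightarrow> Y \<in> C \<Longrightarrow> X \<subseteq> Y \<or> Y \<subseteq> X" using C by (rule chainsD)
      have two: "\<exists>Z\<in>C. u \<in> Z \<and> v \<in> Z" if hu: "u \<in> \<Union>C" and hv: "v \<in> \<Union>C" for u v
      proof -
        obtain X Y where "X\<in>C" "Y\<in>C" "u\<in>X" "v\<in>Y" using hu hv by blast
        then show ?thesis using cmp[of X Y] by blast
      qed
      obtain X0 where X0: "X0 \<in> C" using False by blast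
      have "subspace (\<Union>C)"
        unfolding subspace_def
      proof (intro conjI ballI allI)
        show "0 \<in> \<Union>C" using X0 CA[OF X0] subspace_0 unfolding ext_graph_def by blast
      next
        fix u v assume "u \<in> \<Union>C" "v \<in> \<Union>C"
        then obtain Z where "Z\<in>C" "u\<in>Z" "v\<in>Z" using two by blast
        then show "u + v \<in> \<Union>C" using CA[of Z] subspace_add unfolding ext_graph_def by blast
      next
        fix r :: real and u assume "u \<in> \<Union>C"
        then obtain Z where "Z\<in>C" "u\<in>Z" by blast
        then show "r *\<^sub>R u \<in> \<Union>C" using CA[of Z] subspace_mul unfolding ext_graph_def by blast
      qed
      moreover have "H0 \<subseteq> \<Union>C" using X0 CA[OF X0] unfolding ext_graph_def by blast
      moreover have "\<forall>x a b. (x,a)\<in>\<Union>C \<longrightarrow> (x,b)\<in>\<Union>C \<longrightarrow> a = b"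
      proof (intro allI impI)
        fix x a b assume "(x,a)\<in>\<Union>C" "(x,b)\<in>\<Union>C"
        then obtain Z where "Z\<in>C" "(x,a)\<in>Z" "(x,b)\<in>Z" using two by blast
        then show "a = b" using CA[of Z] unfolding ext_graph_def by blast
      qed
      moreover have "\<forall>x a. (x,a)\<in>\<Union>C \<longrightarrow> a \<le> p x" using CA unfolding ext_graph_def by blast
      ultimately have "\<Union>C \<in> A" unfolding A_def ext_graph_def by blast
      then show ?thesis by blast
    qed
  qed
  from Zorn_Lemma2[OF this] obtain M where MA: "M \<in> A" and Mmax: "\<And>X. X \<in> A \<Longrightarrow> M \<subseteq> X \<Longrightarrow> X = M"
    by blast
  have EM: "ext_graph p H0 M" using MA A_def by blast
  have all: "z \<in> fst ` M" for z
  proof (rule ccontr)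
    assume "z \<notin> fst ` M"
    from one_step[OF p EM this] obtain H' where "ext_graph p H0 H'" "M \<subset> H'" by blast
    then show False using Mmax[of H'] A_def by blast
  qed
  have sM: "subspace M" and fnM: "\<And>x a b. (x,a)\<in>M \<Longrightarrow> (x,b)\<in>M \<Longrightarrow> a = b"
    and domM: "\<And>x a. (x,a)\<in>M \<Longrightarrow> a \<le> p x" and H0M: "H0 \<subseteq> M"
    using EM unfolding ext_graph_def by auto
  define G where "G x = (THE a. (x,a) \<in> M)" for x
  have GM: "(x, G x) \<in> M" for x
  proof -
    obtain a where a: "(x,a) \<in> M" using all[of x] by force
    have "G x = a" unfolding G_def using a fnM by blast
    then show ?thesis using a by simp
  qed
  have Geq: "(x,a) \<in> M \<Longrightarrow> G x = a" for x a using GM fnM by blast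
  have "linear G"
  proof (rule linearI)
    fix x y show "G (x + y) = G x + G y" using Geq[OF sub_add[OF sM GM GM]] .
  next
    fix r :: real and x show "G (r *\<^sub>R x) = r *\<^sub>R G x" using Geq[OF sub_scale[OF sM GM]] by simp
  qed
  moreover have "\<forall>x a. (x,a)\<in>H0 \<longrightarrow> G x = a" using H0M Geq by blast
  moreover have "\<forall>x. G x \<le> p x" using GM domM by blast
  ultimately show ?thesis by blast
qed

lemma HB_norm:
  fixes H0 :: "('e::real_normed_vector \<times> real) set"
  assumes c: "c \<ge> 0" and sH0: "subspace H0"
    and fn0: "\<And>x a b. (x,a)\<in>H0 \<Longrightarrow> (x,b)\<in>H0 \<Longrightarrow> a = b"
    and dom0: "\<And>x a. (x,a)\<in>H0 \<Longrightarrow> a \<le> c * norm x"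
  shows "\<exists>G::'e \<Rightarrow>\<^sub>L real. (\<forall>x a. (x,a)\<in>H0 \<longrightarrow> blinfun_apply G x = a) \<and> norm G \<le> c"
proof -
  have sl: "sublin (\<lambda>x::'e. c * norm x)" unfolding sublin_def
    using c by (auto simp: norm_triangle_ineq mult_left_mono distrib_left[symmetric])
  have "\<exists>G. linear G \<and> (\<forall>x a. (x,a)\<in>H0 \<longrightarrow> G x = a) \<and> (\<forall>x. G x \<le> c * norm x)"
    by (rule HB_graph[where p="\<lambda>x. c * norm x", OF sl sH0]) (auto intro: fn0 dom0)
  then obtain G where G: "linear G" "\<forall>x a. (x,a)\<in>H0 \<longrightarrow> G x = a"
    "\<forall>x. G x \<le> c * norm x" by blast
  have ab: "norm (G x) \<le> c * norm x" for x
  proof -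
    have "G (-x) \<le> c * norm (-x)" using G(3) by blast
    moreover have "G (-x) = - G x" using linear_neg[OF G(1)] .
    ultimately show ?thesis using G(3)[rule_format, of x] by simp
  qed
  have bl: "bounded_linear G"
    using G(1) ab by (intro bounded_linear_intro[where K=c]) (auto simp: linear_add linear_scale mult.commute)
  show ?thesis
  proof (intro exI conjI)
    show "\<forall>x a. (x,a)\<in>H0 \<longrightarrow> blinfun_apply (Blinfun G) x = a"
      using G(2) bounded_linear_Blinfun_apply[OF bl] by simp
    show "norm (Blinfun G) \<le> c"
      by (rule norm_blinfun_bound[OF c]) (use ab in \<open>simp add: bounded_linear_Blinfun_apply[OF bl]\<close>)
  qed
qed

lemma norming:
  fixes x :: "'e::real_normed_vector"
  shows "\<exists>f::'e \<Rightarrow>\<^sub>L real. norm f \<le> 1 \<and> blinfun_apply f x = norm x"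
proof -
  define H0 where "H0 = range (\<lambda>t::real. (t *\<^sub>R x, t * norm x))"
  have "subspace H0" unfolding subspace_def H0_def
  proof (intro conjI ballI allI)
    show "0 \<in> range (\<lambda>t::real. (t *\<^sub>R x, t * norm x))"
      by (rule image_eqI[where x=0]) (auto simp: zero_prod_def)
  next
    fix u v assume "u \<in> range (\<lambda>t::real. (t *\<^sub>R x, t * norm x))" "v \<in> range (\<lambda>t::real. (t *\<^sub>R x, t * norm x))"
    then obtain t s where "u = (t *\<^sub>R x, t * norm x)" "v = (s *\<^sub>R x, s * norm x)" by blast
    then show "u + v \<in> range (\<lambda>t::real. (t *\<^sub>R x, t * norm x))"
      by (intro image_eqI[where x="t+s"]) (auto simp: algebra_simps scaleR_add_left)
  next
    fix r :: real and u assume "u \<in> range (\<lambda>t::real. (t *\<^sub>R x, t * norm x))"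
    then obtain t where "u = (t *\<^sub>R x, t * norm x)" by blast
    then show "r *\<^sub>R u \<in> range (\<lambda>t::real. (t *\<^sub>R x, t * norm x))"
      by (intro image_eqI[where x="r*t"]) auto
  qed
  moreover have "a = b" if h1: "(y,a)\<in>H0" and h2: "(y,b)\<in>H0" for y a b
  proof -
    obtain t where t: "y = t *\<^sub>R x" "a = t * norm x" using h1 unfolding H0_def by auto
    obtain s where s: "y = s *\<^sub>R x" "b = s * norm x" using h2 unfolding H0_def by auto
    from t s show ?thesis by (cases "x = 0") auto
  qed
  moreover have "a \<le> 1 * norm y" if "(y,a)\<in>H0" for y a
    using that unfolding H0_def by (auto intro: mult_right_mono[OF abs_ge_self norm_ge_zero])
  ultimately obtain G :: "'e \<Rightarrow>\<^sub>L real" where "\<forall>y a. (y,a)\<in>H0 \<longrightarrow> blinfun_apply G y = a" "norm G \<le> 1"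
    using HB_norm[of 1 H0] by auto
  moreover have "(x, norm x) \<in> H0" unfolding H0_def by (rule image_eqI[where x=1]) auto
  ultimately show ?thesis by blast
qed



lemma lin_f: "linear (\<lambda>v::'a::real_normed_vector \<times> real. blinfun_apply g (fst v))"
  by (rule linearI) (auto simp: blinfun.add_right blinfun.scaleR_right)
lemma lin_snd: "linear (\<lambda>v::'a::real_normed_vector \<times> real. snd v)"
  by (rule linearI) auto

lemma convex_ge_lin: "linear (L::'b::real_vector \<Rightarrow> real) \<Longrightarrow> convex {v. a \<le> L v}"
  using convex_linear_vimage[of L "{a..}"] by (simp add: vimage_def)
lemma convex_eq_lin: "linear (L::'b::real_vector \<Rightarrow> real) \<Longrightarrow> convex {v. L v = 0}"
  using convex_linear_vimage[of L "{0}"] by (simp add: vimage_def)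

lemma md_ge0: "C \<noteq> {} \<Longrightarrow> maxdist p C \<ge> 0"
  unfolding maxdist_def maxnorm_def by (rule cInf_greatest) auto
lemma md_le: "c \<in> C \<Longrightarrow> maxdist p C \<le> maxnorm (p - c)"
  unfolding maxdist_def by (rule cInf_lower) (auto simp: bdd_below_def maxnorm_def intro!: exI[of _ 0])
lemma md_lt: "C \<noteq> {} \<Longrightarrow> maxdist p C < e \<Longrightarrow> \<exists>c\<in>C. maxnorm (p - c) < e"
  unfolding maxdist_def using cInf_lessD[of "(\<lambda>c. maxnorm (p - c)) ` C" e] by auto

lemma construct:
  fixes x :: "nat \<Rightarrow> 'a::real_normed_vector" and f :: "nat \<Rightarrow> 'a \<Rightarrow>\<^sub>L real"
  assumes th: "\<theta> > 0" and xb: "\<And>k. norm (x k) \<le> R" and fb: "\<And>n. norm (f n) \<le> 1"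
    and fx: "\<And>n k. blinfun_apply (f n) (x k) = (if n \<le> k then \<theta> else 0)"
  shows "\<exists>C :: ('a \<times> real) set. C \<noteq> {} \<and> maxbounded C \<and> convex C \<and>
           (\<forall>y::'a. maxdist (y, 0) C > 0) \<and>
           (\<forall>\<epsilon>>0. \<exists>M :: 'a set. M \<noteq> {} \<and> bounded M \<and> diameter M < \<epsilon> \<and>
                 Inf ((\<lambda>y. maxdist (y, 0) C) ` M) = 0)"
proof -
  define e where "e j = 1 / (real j + 1)" for j :: nat
  have e0: "0 < e j" "e j \<le> 1" for j unfolding e_def by auto
  define pt where "pt jk = ((1 - e (fst jk)) *\<^sub>R x (fst jk) + e (fst jk) *\<^sub>R x (snd jk), 1 / (real (snd jk) + 1))" for jk
  define I where "I = {jk :: nat \<times> nat. fst jk \<le> snd jk}"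
  define C where "C = convex hull (pt ` I)"
  define R' where "R' = max R 1"
  have R': "R' > 0" "\<And>k. norm (x k) \<le> R'" unfolding R'_def using xb by (auto intro: max.coboundedI1)
  have fabs: "\<bar>blinfun_apply (f n) z\<bar> \<le> norm z" for n z
    using norm_blinfun[of "f n" z] fb[of n] mult_right_mono[OF fb[of n] norm_ge_zero[of z]] by simp
  have fst_pt: "blinfun_apply (f n) (fst (pt (j,k))) = (1 - e j) * (if n \<le> j then \<theta> else 0) + e j * (if n \<le> k then \<theta> else 0)"
    for n j k unfolding pt_def by (simp add: blinfun.add_right blinfun.scaleR_right fx)
  have Cne: "C \<noteq> {}" unfolding C_def I_def by auto
  have cvx: "convex C" unfolding C_def by simp
  have bdd: "maxbounded C"
  proof -
    define B where "B = {v::'a\<times>real. norm (fst v) \<le> R' \<and> \<bar>snd v\<bar> \<le> R'}"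
    have "convex B"
    proof -
      have "B = (fst -` cball 0 R') \<inter> (snd -` {-R'..R'})" unfolding B_def by auto
      moreover have "convex (fst -` cball (0::'a) R' :: ('a\<times>real) set)"
        using convex_linear_vimage[OF _ convex_cball, of "fst::'a\<times>real\<Rightarrow>'a"] by (simp add: linearI)
      moreover have "convex (snd -` {-R'..R'} :: ('a\<times>real) set)"
        using convex_linear_vimage[OF lin_snd, of "{-R'..R'}"] by (simp add: vimage_def)
      ultimately show ?thesis by (simp add: convex_Int)
    qed
    moreover have "pt ` I \<subseteq> B"
    proof
      fix v assume "v \<in> pt ` I"
      then obtain j k where v: "v = pt (j,k)" by auto
      have "norm ((1 - e j) *\<^sub>R x j + e j *\<^sub>R x k) \<le> (1 - e j) * R' + e j * R'"
        using e0[of j] R'(2)[of j] R'(2)[of k]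
        by (intro order_trans[OF norm_triangle_ineq] add_mono) (auto intro: mult_left_mono)
      then have "norm (fst v) \<le> R'" unfolding v pt_def by (simp add: algebra_simps)
      moreover have "\<bar>snd v\<bar> \<le> R'"
      proof -
        have "1/(real k + 1) \<le> 1" by (simp add: field_simps)
        then show ?thesis unfolding v pt_def R'_def by (simp add: max.coboundedI2)
      qed
      ultimately show "v \<in> B" unfolding B_def by auto
    qed
    ultimately have "C \<subseteq> B" unfolding C_def by (rule hull_minimal[rotated])
    then show ?thesis unfolding maxbounded_def maxnorm_def B_def by (intro exI[of _ R']) auto
  qed
  have key: "\<theta> \<le> blinfun_apply (f n) (fst v) + (real n + 1) * blinfun_apply (f N) (fst v) + (real n + 1) * \<theta> * real N * snd v"
    if "v \<in> C" for v n N
  proof -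
    define L where "L v = blinfun_apply (f n) (fst v) + (real n + 1) * blinfun_apply (f N) (fst v) + (real n + 1) * \<theta> * real N * snd v" for v :: "'a \<times> real"
    have "linear L" unfolding L_def
      by (rule linearI) (auto simp: blinfun.add_right blinfun.scaleR_right algebra_simps)
    then have cv: "convex {v. \<theta> \<le> L v}" by (rule convex_ge_lin)
    have "pt ` I \<subseteq> {v. \<theta> \<le> L v}"
    proof
      fix v assume "v \<in> pt ` I"
      then obtain j k where v: "v = pt (j,k)" "j \<le> k" unfolding I_def by auto
      have i1: "\<theta> * (1 - (real n + 1) * e j) \<le> blinfun_apply (f n) (fst v)"
      proof (cases "n \<le> j")
        case True then show ?thesis unfolding v fst_pt using v(2) th e0[of j] by (simp add: algebra_simps)
      next
        case False
        then have "(real n + 1) * e j \<ge> 1" unfolding e_def by (simp add: field_simps)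
        then have "\<theta> * (1 - (real n + 1) * e j) \<le> 0" using th by (simp add: mult_nonneg_nonpos)
        moreover have "0 \<le> blinfun_apply (f n) (fst v)" unfolding v fst_pt using th e0[of j] by simp
        ultimately show ?thesis by linarith
      qed
      have i2: "\<theta> * (e j - real N * snd v) \<le> blinfun_apply (f N) (fst v)"
      proof (cases "N \<le> k")
        case True
        have "\<theta> * (e j - real N * snd v) \<le> \<theta> * e j" using th unfolding v pt_def by simp
        also have "\<dots> \<le> blinfun_apply (f N) (fst v)" unfolding v fst_pt using True th e0[of j] by simp
        finally show ?thesis .
      next
        case False
        then have "real N * snd v \<ge> 1" unfolding v pt_def by (simp add: field_simps)
        then have "\<theta> * (e j - real N * snd v) \<le> 0" using th e0[of j] by (simp add: mult_nonneg_nonpos)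
        moreover have "0 \<le> blinfun_apply (f N) (fst v)" unfolding v fst_pt using th e0[of j] by simp
        ultimately show ?thesis by linarith
      qed
      have "\<theta> = \<theta> * (1 - (real n + 1) * e j) + (real n + 1) * (\<theta> * (e j - real N * snd v)) + (real n + 1) * \<theta> * real N * snd v"
        by (simp add: algebra_simps)
      also have "\<dots> \<le> L v"
      proof -
        have m: "(real n + 1) * (\<theta> * (e j - real N * snd v)) \<le> (real n + 1) * blinfun_apply (f N) (fst v)"
          by (rule mult_left_mono[OF i2]) simp
        show ?thesis using i1 m unfolding L_def by linarith
      qed
      finally show "v \<in> {v. \<theta> \<le> L v}" by simp
    qed
    then have "C \<subseteq> {v. \<theta> \<le> L v}" unfolding C_def using cv by (rule hull_minimal)
    then show ?thesis using that unfolding L_def by auto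
  qed
  have supp: "\<exists>N. blinfun_apply (f N) (fst v) = 0" if "v \<in> C" for v
  proof -
    have "v \<in> {y. \<exists>S u. finite S \<and> S \<subseteq> pt ` I \<and> (\<forall>x\<in>S. 0 \<le> u x) \<and> sum u S = 1 \<and> sum (\<lambda>v. u v *\<^sub>R v) S = y}"
      using that unfolding C_def by (simp only: convex_hull_explicit)
    then obtain S u where S: "finite S" "S \<subseteq> pt ` I" "\<forall>x\<in>S. 0 \<le> u x" "sum u S = 1" "(\<Sum>s\<in>S. u s *\<^sub>R s) = v"
      by blast
    have "v \<in> {y. \<exists>S' u. finite S' \<and> S' \<subseteq> S \<and> (\<forall>x\<in>S'. 0 \<le> u x) \<and> sum u S' = 1 \<and> sum (\<lambda>v. u v *\<^sub>R v) S' = y}"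
      using S by (intro CollectI exI[of _ S] exI[of _ u]) simp
    then have vS: "v \<in> convex hull S" by (simp only: convex_hull_explicit)
    obtain S' where S': "S' \<subseteq> I" "finite S'" "S = pt ` S'" using finite_subset_image[OF S(1) S(2)] by blast
    define K where "K = Max (insert 0 (snd ` S'))"
    have Kb: "snd jk \<le> K" if "jk \<in> S'" for jk unfolding K_def using S'(2) that by auto
    define L where "L v = blinfun_apply (f (Suc K)) (fst v)" for v :: "'a \<times> real"
    have "S \<subseteq> {v. L v = 0}"
    proof
      fix s assume "s \<in> S"
      then obtain jk where jk: "jk \<in> S'" "s = pt jk" using S' by auto
      have "fst jk \<le> snd jk" using jk S'(1) I_def by auto
      then show "s \<in> {v. L v = 0}" using Kb[OF jk(1)] fst_pt[of "Suc K" "fst jk" "snd jk"] unfolding L_def jk(2)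
        by simp
    qed
    moreover have "convex {v. L v = 0}" unfolding L_def by (rule convex_eq_lin[OF lin_f])
    ultimately have "convex hull S \<subseteq> {v. L v = 0}" by (rule hull_minimal)
    then show ?thesis using vS unfolding L_def by auto
  qed
  have pos: "maxdist (y, 0) C > 0" for y
  proof (rule ccontr)
    assume "\<not> maxdist (y, 0) C > 0"
    then have close: "\<exists>c\<in>C. norm (y - fst c) < \<eta> \<and> \<bar>snd c\<bar> < \<eta>" if "\<eta> > 0" for \<eta>
    proof -
      from md_lt[OF Cne, of "(y,0)" \<eta>] that \<open>\<not> maxdist (y, 0) C > 0\<close>
      obtain c where "c \<in> C" "maxnorm ((y,0) - c) < \<eta>" by force
      then show ?thesis unfolding maxnorm_def by (intro bexI[of _ c]) auto
    qed
    have small: "\<exists>N. blinfun_apply (f N) y < \<eta>" if h\<eta>: "\<eta> > 0" for \<eta>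
    proof -
      obtain c where c: "c \<in> C" "norm (y - fst c) < \<eta>" using close[OF h\<eta>] by blast
      obtain N where N: "blinfun_apply (f N) (fst c) = 0" using supp[OF c(1)] by blast
      have "blinfun_apply (f N) y = blinfun_apply (f N) (y - fst c)" using N by (simp add: blinfun.diff_right)
      also have "\<dots> \<le> norm (y - fst c)" using fabs[of N "y - fst c"] by simp
      finally show ?thesis using c(2) by (intro exI[of _ N]) simp
    qed
    obtain N where N: "blinfun_apply (f N) y < \<theta>/4" using small[of "\<theta>/4"] th by auto
    obtain N' where N': "blinfun_apply (f N') y < \<theta>/(8*(real N + 1))" using small[of "\<theta>/(8*(real N + 1))"] th by auto
    define \<eta> where "\<eta> = \<theta>/(2*(real N + 2)*(1 + \<theta>*real N'))"
    have pp: "0 < 1 + \<theta> * real N'" using th by (simp add: add_pos_nonneg)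
    have \<eta>0: "\<eta> > 0" unfolding \<eta>_def using th pp by (intro divide_pos_pos mult_pos_pos) auto
    obtain c where c: "c \<in> C" "norm (y - fst c) < \<eta>" "\<bar>snd c\<bar> < \<eta>" using close[OF \<eta>0] by blast
    have k: "\<theta> \<le> blinfun_apply (f N) (fst c) + (real N + 1) * blinfun_apply (f N') (fst c) + (real N + 1) * \<theta> * real N' * snd c"
      using key[OF c(1)] .
    have a1: "blinfun_apply (f N) (fst c) < \<theta>/4 + \<eta>"
      using fabs[of N "fst c - y"] N c(2) by (simp add: blinfun.diff_right norm_minus_commute)
    have a2: "blinfun_apply (f N') (fst c) < \<theta>/(8*(real N + 1)) + \<eta>"
      using fabs[of N' "fst c - y"] N' c(2) by (simp add: blinfun.diff_right norm_minus_commute)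
    have a3: "(real N + 1) * \<theta> * real N' * snd c \<le> (real N + 1) * \<theta> * real N' * \<eta>"
      using c(3) th by (intro mult_left_mono) auto
    have a2': "(real N + 1) * blinfun_apply (f N') (fst c) \<le> (real N + 1) * (\<theta>/(8*(real N + 1)) + \<eta>)"
      using a2 by (intro mult_left_mono) auto
    have e1: "(real N + 1) * (\<theta>/(8*(real N + 1)) + \<eta>) = \<theta>/8 + (real N + 1) * \<eta>" by (simp add: field_simps)
    have e2: "\<eta> + (real N + 1) * \<eta> + (real N + 1) * \<theta> * real N' * \<eta> \<le> (real N + 2)*(1 + \<theta>*real N') * \<eta>"
      using \<eta>0 th by (simp add: algebra_simps)
    have e3: "(real N + 2)*(1 + \<theta>*real N') * \<eta> = \<theta>/2"
    proof -
      define D where "D = (real N + 2)*(1 + \<theta>*real N')"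
      have "D \<noteq> 0" unfolding D_def using pp by simp
      moreover have "\<eta> = \<theta> / (2*D)" unfolding \<eta>_def D_def by (simp add: mult.assoc)
      ultimately have "D * \<eta> = \<theta>/2" by simp
      then show ?thesis unfolding D_def .
    qed
    have s1: "\<theta> < \<theta>/4 + \<eta> + (\<theta>/8 + (real N + 1) * \<eta>) + (real N + 1) * \<theta> * real N' * \<eta>"
      using k a1 a2' a3 unfolding e1 by linarith
    have s2: "\<eta> + (real N + 1) * \<eta> + (real N + 1) * \<theta> * real N' * \<eta> \<le> \<theta>/2"
      using e2 e3 by linarith
    from s1 s2 have "\<theta> < \<theta>/4 + \<theta>/8 + \<theta>/2" by linarith
    then show False using th by simp
  qed
  have smallset: "\<exists>M :: 'a set. M \<noteq> {} \<and> bounded M \<and> diameter M < \<epsilon> \<and> Inf ((\<lambda>y. maxdist (y, 0) C) ` M) = 0"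
    if "\<epsilon> > 0" for \<epsilon>
  proof -
    obtain j :: nat where j: "2*R'/\<epsilon> < real j" using reals_Archimedean2 by blast
    have ej: "e j * (2*R') < \<epsilon>"
    proof -
      have "2*R' < \<epsilon> * real j" using j that by (simp add: field_simps)
      then have "2*R' < \<epsilon> * (real j + 1)" using that by (simp add: algebra_simps)
      then show ?thesis unfolding e_def using that by (simp add: field_simps)
    qed
    define m where "m k = (1 - e j) *\<^sub>R x j + e j *\<^sub>R x k" for k
    define M where "M = m ` {j..}"
    have Mne: "M \<noteq> {}" unfolding M_def by auto
    have mb: "norm (m k) \<le> R'" for k
    proof -
      have "norm (m k) \<le> (1 - e j) * R' + e j * R'" unfolding m_def
        using e0[of j] R'(2)[of j] R'(2)[of k]
        by (intro order_trans[OF norm_triangle_ineq] add_mono) (auto intro: mult_left_mono)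
      then show ?thesis by (simp add: algebra_simps)
    qed
    have "bounded M" unfolding M_def bounded_iff using mb by blast
    moreover have "diameter M \<le> e j * (2*R')"
    proof (rule diameter_le)
      show "M \<noteq> {} \<or> 0 \<le> e j * (2*R')" using Mne by simp
      fix a b assume "a \<in> M" "b \<in> M"
      then obtain k l where ab: "a = m k" "b = m l" unfolding M_def by auto
      have "a - b = e j *\<^sub>R (x k - x l)" unfolding ab m_def by (simp add: algebra_simps)
      then have "norm (a - b) = e j * norm (x k - x l)" using e0[of j] by simp
      also have "\<dots> \<le> e j * (2*R')"
        using e0[of j] norm_triangle_ineq4[of "x k" "x l"] R'(2)[of k] R'(2)[of l]
        by (intro mult_left_mono) auto
      finally show "norm (a - b) \<le> e j * (2*R')" .
    qed
    moreover have "Inf ((\<lambda>y. maxdist (y, 0) C) ` M) = 0"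
    proof -
      let ?S = "(\<lambda>y. maxdist (y, 0) C) ` M"
      have Sne: "?S \<noteq> {}" using Mne by simp
      have ge: "0 \<le> Inf ?S" by (rule cInf_greatest[OF Sne]) (auto intro: md_ge0[OF Cne])
      have bb: "bdd_below ?S" unfolding bdd_below_def using md_ge0[OF Cne] by blast
      have ub: "maxdist (m k, 0) C \<le> 1/(real k + 1)" if "j \<le> k" for k
      proof -
        have "pt (j,k) \<in> C" unfolding C_def I_def using that by (intro hull_inc) auto
        then have "maxdist (m k, 0) C \<le> maxnorm ((m k, 0) - pt (j,k))" by (rule md_le)
        also have "\<dots> = 1/(real k + 1)" unfolding maxnorm_def pt_def m_def by simp
        finally show ?thesis .
      qed
      have "\<not> Inf ?S > 0"
      proof
        assume g: "Inf ?S > 0"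
        obtain k :: nat where k: "1 / Inf ?S < real k" using reals_Archimedean2 by blast
        define k' where "k' = max j k"
        have "1/(real k' + 1) < Inf ?S"
        proof -
          have "1 / Inf ?S < real k' + 1" using k unfolding k'_def by linarith
          then show ?thesis using g by (simp add: field_simps)
        qed
        moreover have "Inf ?S \<le> maxdist (m k', 0) C"
          by (rule cInf_lower[OF _ bb]) (auto simp: M_def k'_def)
        ultimately show False using ub[of k'] k'_def by linarith
      qed
      then show ?thesis using ge by linarith
    qed
    ultimately show ?thesis using Mne ej by (intro exI[of _ M]) auto
  qed
  show ?thesis using Cne bdd cvx pos smallset by (intro exI[of _ C]) blast
qed



lemma far_away:
  fixes \<Phi> :: "('a::banach \<Rightarrow>\<^sub>L real) \<Rightarrow>\<^sub>L real"
  assumes nr: "\<forall>x. \<exists>f. blinfun_apply \<Phi> f \<noteq> blinfun_apply f x"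
  shows "\<exists>d>0. \<forall>z. \<exists>f. \<bar>blinfun_apply \<Phi> f - blinfun_apply f z\<bar> > d * norm f"
proof (rule ccontr)
  assume nt: "\<not> ?thesis"
  have cl: "\<forall>d>0. \<exists>z. \<forall>f. \<bar>blinfun_apply \<Phi> f - blinfun_apply f z\<bar> \<le> d * norm f"
  proof (intro allI impI)
    fix d :: real assume d: "d > 0"
    from nt d have "\<not> (\<forall>z. \<exists>f. \<bar>blinfun_apply \<Phi> f - blinfun_apply f z\<bar> > d * norm f)" by blast
    then show "\<exists>z. \<forall>f. \<bar>blinfun_apply \<Phi> f - blinfun_apply f z\<bar> \<le> d * norm f" by (auto simp: not_less)
  qed
  have "\<forall>m. \<exists>z. \<forall>f. \<bar>blinfun_apply \<Phi> f - blinfun_apply f z\<bar> \<le> inverse (real (Suc m)) * norm f"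
    using cl by simp
  then obtain xs where xs: "\<And>m f. \<bar>blinfun_apply \<Phi> f - blinfun_apply f (xs m)\<bar> \<le> inverse (real (Suc m)) * norm f"
    by metis
  have dd: "norm (xs m - xs n) \<le> inverse (real (Suc m)) + inverse (real (Suc n))" for m n
  proof -
    obtain g :: "'a \<Rightarrow>\<^sub>L real" where g: "norm g \<le> 1" "blinfun_apply g (xs m - xs n) = norm (xs m - xs n)"
      using norming by blast
    have "norm (xs m - xs n) = (blinfun_apply g (xs m) - blinfun_apply \<Phi> g) + (blinfun_apply \<Phi> g - blinfun_apply g (xs n))"
      using g(2) by (simp add: blinfun.diff_right)
    also have "\<dots> \<le> inverse (real (Suc m)) * norm g + inverse (real (Suc n)) * norm g"
      using xs[where m=m and f=g] xs[where m=n and f=g] by (intro add_mono) auto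
    also have "\<dots> \<le> inverse (real (Suc m)) + inverse (real (Suc n))"
      using g(1) by (intro add_mono) (auto intro: mult_left_le)
    finally show ?thesis .
  qed
  have "Cauchy xs"
  proof (rule CauchyI)
    fix e :: real assume e: "e > 0"
    obtain M :: nat where M: "2 / e < real M" using reals_Archimedean2 by blast
    have "inverse (real (Suc M)) < e/2"
    proof -
      have "2 < e * real (Suc M)" using M e by (simp add: field_simps)
      then show ?thesis using e by (simp add: field_simps)
    qed
    moreover have iv: "inverse (real (Suc k)) \<le> inverse (real (Suc M))" if "k \<ge> M" for k
      using that by (simp add: field_simps)
    ultimately have "\<forall>m\<ge>M. \<forall>n\<ge>M. norm (xs m - xs n) < e"
    proof (intro allI impI)
      fix m n assume "m \<ge> M" "n \<ge> M"
      then have "norm (xs m - xs n) \<le> inverse (real (Suc M)) + inverse (real (Suc M))"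
        using dd[of m n] iv[of m] iv[of n] by linarith
      then show "norm (xs m - xs n) < e" using \<open>inverse (real (Suc M)) < e/2\<close> by linarith
    qed
    then show "\<exists>M. \<forall>m\<ge>M. \<forall>n\<ge>M. norm (xs m - xs n) < e" by blast
  qed
  then obtain x where x: "xs \<longlonglongrightarrow> x" using Cauchy_convergent_iff convergent_def by blast
  have "blinfun_apply \<Phi> f = blinfun_apply f x" for f
  proof -
    have t1: "(\<lambda>m. blinfun_apply \<Phi> f - blinfun_apply f (xs m)) \<longlonglongrightarrow> blinfun_apply \<Phi> f - blinfun_apply f x"
      by (intro tendsto_diff tendsto_const blinfun.tendsto[OF tendsto_const x])
    have t0: "(\<lambda>m. inverse (real (Suc m)) * norm f) \<longlonglongrightarrow> 0"
      by (rule tendsto_mult_left_zero[OF LIMSEQ_inverse_real_of_nat])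
    have t2: "(\<lambda>m. blinfun_apply \<Phi> f - blinfun_apply f (xs m)) \<longlonglongrightarrow> 0"
      by (rule Lim_null_comparison[OF _ t0]) (use xs in auto)
    from LIMSEQ_unique[OF t1 t2] show ?thesis by simp
  qed
  then show False using nr by blast
qed

lemma step_functional:
  fixes \<Phi> :: "('a::banach \<Rightarrow>\<^sub>L real) \<Rightarrow>\<^sub>L real" and xs :: "nat \<Rightarrow> 'a" and hs :: "nat \<Rightarrow> 'a \<Rightarrow>\<^sub>L real"
  assumes bio: "\<And>i k. i < m \<Longrightarrow> k < m \<Longrightarrow> blinfun_apply (hs i) (xs k) = (if i = k then 1 else 0)"
    and far: "\<forall>z. \<exists>f. \<bar>blinfun_apply \<Phi> f - blinfun_apply f z\<bar> > d * norm f"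
    and th: "0 \<le> \<theta>" "\<theta> < d"
  shows "\<exists>f. norm f \<le> 1 \<and> (\<forall>k<m. blinfun_apply f (xs k) = 0) \<and> blinfun_apply \<Phi> f > \<theta>"
proof (rule ccontr)
  assume nt: "\<not> ?thesis"
  define Y where "Y = {f :: 'a \<Rightarrow>\<^sub>L real. \<forall>k<m. blinfun_apply f (xs k) = 0}"
  have bnd: "blinfun_apply \<Phi> f \<le> \<theta> * norm f" if "f \<in> Y" for f
  proof (cases "f = 0")
    case True then show ?thesis by simp
  next
    case False
    define g where "g = (1 / norm f) *\<^sub>R f"
    have "norm g \<le> 1" unfolding g_def using False by simp
    moreover have "\<forall>k<m. blinfun_apply g (xs k) = 0" using that unfolding g_def Y_def by (simp add: blinfun.bilinear_simps)
    ultimately have "blinfun_apply \<Phi> g \<le> \<theta>" using nt by (auto simp: not_less)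
    then have "(1 / norm f) * blinfun_apply \<Phi> f \<le> \<theta>" unfolding g_def by (simp add: blinfun.scaleR_right)
    then show ?thesis using False by (simp add: field_simps)
  qed
  define H0 where "H0 = (\<lambda>f. (f, blinfun_apply \<Phi> f)) ` Y"
  have "subspace H0" unfolding subspace_def H0_def Y_def
    by (auto simp: zero_prod_def blinfun.bilinear_simps image_iff
             intro!: exI[where x="_ + _"] exI[where x="_ *\<^sub>R _"])
  moreover have "\<And>x a b. (x,a)\<in>H0 \<Longrightarrow> (x,b)\<in>H0 \<Longrightarrow> a = b" unfolding H0_def by auto
  moreover have "\<And>x a. (x,a)\<in>H0 \<Longrightarrow> a \<le> \<theta> * norm x" unfolding H0_def using bnd by auto
  ultimately obtain \<Psi> :: "('a \<Rightarrow>\<^sub>L real) \<Rightarrow>\<^sub>L real" where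
    \<Psi>: "\<forall>x a. (x,a)\<in>H0 \<longrightarrow> blinfun_apply \<Psi> x = a" "norm \<Psi> \<le> \<theta>"
    using HB_norm[OF th(1), of H0] by blast
  have \<Psi>Y: "f \<in> Y \<Longrightarrow> blinfun_apply \<Psi> f = blinfun_apply \<Phi> f" for f using \<Psi>(1) unfolding H0_def by auto
  define z where "z = (\<Sum>k<m. (blinfun_apply \<Phi> (hs k) - blinfun_apply \<Psi> (hs k)) *\<^sub>R xs k)"
  have main: "blinfun_apply \<Phi> f - blinfun_apply f z = blinfun_apply \<Psi> f" for f
  proof -
    define g where "g = f - (\<Sum>k<m. blinfun_apply f (xs k) *\<^sub>R hs k)"
    have "g \<in> Y" unfolding Y_def
    proof (intro CollectI allI impI)
      fix l assume l: "l < m"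
      have "(\<Sum>k<m. blinfun_apply f (xs k) * blinfun_apply (hs k) (xs l)) = (\<Sum>k<m. if k = l then blinfun_apply f (xs k) else 0)"
        by (rule sum.cong) (use bio l in auto)
      also have "\<dots> = blinfun_apply f (xs l)" using l by simp
      finally show "blinfun_apply g (xs l) = 0" unfolding g_def by (simp add: blinfun.bilinear_simps)
    qed
    then have "blinfun_apply \<Psi> g = blinfun_apply \<Phi> g" by (rule \<Psi>Y)
    then have "blinfun_apply \<Psi> f - (\<Sum>k<m. blinfun_apply f (xs k) * blinfun_apply \<Psi> (hs k))
        = blinfun_apply \<Phi> f - (\<Sum>k<m. blinfun_apply f (xs k) * blinfun_apply \<Phi> (hs k))"
      unfolding g_def by (simp add: blinfun.bilinear_simps)
    moreover have "blinfun_apply f z = (\<Sum>k<m. blinfun_apply f (xs k) * blinfun_apply \<Phi> (hs k)) - (\<Sum>k<m. blinfun_apply f (xs k) * blinfun_apply \<Psi> (hs k))"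
      unfolding z_def by (simp add: blinfun.bilinear_simps algebra_simps sum_subtractf)
    ultimately show ?thesis by simp
  qed
  obtain f where f: "\<bar>blinfun_apply \<Phi> f - blinfun_apply f z\<bar> > d * norm f" using far by blast
  have "\<bar>blinfun_apply \<Psi> f\<bar> \<le> \<theta> * norm f"
    using norm_blinfun[of \<Psi> f] mult_right_mono[OF \<Psi>(2) norm_ge_zero[of f]] by simp
  moreover have "\<theta> * norm f \<le> d * norm f" using th by (intro mult_right_mono) auto
  ultimately show False using f main[of f] by simp
qed

lemma helly:
  fixes \<Phi> :: "('a::banach \<Rightarrow>\<^sub>L real) \<Rightarrow>\<^sub>L real" and us :: "nat \<Rightarrow> 'a" and fs :: "nat \<Rightarrow> 'a \<Rightarrow>\<^sub>L real"
  assumes bio: "\<And>i k. i < n \<Longrightarrow> k < n \<Longrightarrow> blinfun_apply (fs i) (us k) = (if i = k then 1 else 0)"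
    and r: "norm \<Phi> < r"
  shows "\<exists>x. norm x < r \<and> (\<forall>i<n. blinfun_apply (fs i) x = blinfun_apply \<Phi> (fs i))"
proof -
  define x0 where "x0 = (\<Sum>k<n. blinfun_apply \<Phi> (fs k) *\<^sub>R us k)"
  have fx0: "blinfun_apply (fs i) x0 = blinfun_apply \<Phi> (fs i)" if "i < n" for i
  proof -
    have "blinfun_apply (fs i) x0 = (\<Sum>k<n. blinfun_apply \<Phi> (fs k) * blinfun_apply (fs i) (us k))"
      unfolding x0_def by (simp add: blinfun.bilinear_simps)
    also have "\<dots> = (\<Sum>k<n. if k = i then blinfun_apply \<Phi> (fs k) else 0)"
      by (rule sum.cong) (use bio that in auto)
    also have "\<dots> = blinfun_apply \<Phi> (fs i)" using that by simp
    finally show ?thesis .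
  qed
  define Z where "Z = {z. \<forall>i<n. blinfun_apply (fs i) z = 0}"
  show ?thesis
  proof (cases "\<exists>z\<in>Z. norm (x0 - z) < r")
    case True
    then obtain z where "z \<in> Z" "norm (x0 - z) < r" by blast
    then show ?thesis using fx0 unfolding Z_def by (intro exI[of _ "x0 - z"]) (simp add: blinfun.bilinear_simps)
  next
    case False
    then have far: "\<And>z. z \<in> Z \<Longrightarrow> r \<le> norm (x0 - z)" by (auto simp: not_less)
    have r0: "r > 0" using r norm_ge_zero[of \<Phi>] by linarith
    have Zadd: "a \<in> Z \<Longrightarrow> b \<in> Z \<Longrightarrow> a + b \<in> Z" for a b unfolding Z_def by (simp add: blinfun.bilinear_simps)
    have Zscale: "a \<in> Z \<Longrightarrow> c *\<^sub>R a \<in> Z" for a c unfolding Z_def by (simp add: blinfun.bilinear_simps)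
    have Z0: "0 \<in> Z" unfolding Z_def by (simp add: blinfun.bilinear_simps)
    have x0Z: "x0 \<notin> Z" using far[of x0] r0 by auto
    define H0 where "H0 = {(z + t *\<^sub>R x0, t * r) | z t. z \<in> Z}"
    have "subspace H0" unfolding subspace_def
    proof (intro conjI ballI allI)
      show "0 \<in> H0" unfolding H0_def using Z0 by (auto simp: zero_prod_def intro!: exI[of _ 0] exI[of _ "0::real"])
    next
      fix u v assume "u \<in> H0" "v \<in> H0"
      then obtain a t b s where "u = (a + t *\<^sub>R x0, t * r)" "v = (b + s *\<^sub>R x0, s * r)" "a \<in> Z" "b \<in> Z"
        unfolding H0_def by blast
      then show "u + v \<in> H0" unfolding H0_def using Zadd
        by (intro CollectI exI[of _ "a + b"] exI[of _ "t + s"]) (simp add: algebra_simps scaleR_add_left)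
    next
      fix c :: real and u assume "u \<in> H0"
      then obtain a t where "u = (a + t *\<^sub>R x0, t * r)" "a \<in> Z" unfolding H0_def by blast
      then show "c *\<^sub>R u \<in> H0" unfolding H0_def using Zscale
        by (intro CollectI exI[of _ "c *\<^sub>R a"] exI[of _ "c * t"]) (simp add: algebra_simps scaleR_add_right)
    qed
    moreover have "a1 = a2" if h1: "(w,a1)\<in>H0" and h2: "(w,a2)\<in>H0" for w a1 a2
    proof -
      obtain a t where 1: "w = a + t *\<^sub>R x0" "a1 = t * r" "a \<in> Z" using h1 unfolding H0_def by blast
      obtain b s where 2: "w = b + s *\<^sub>R x0" "a2 = s * r" "b \<in> Z" using h2 unfolding H0_def by blast
      show ?thesis
      proof (cases "t = s")
        case True then show ?thesis using 1 2 by simp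
      next
        case False
        have e: "(t - s) *\<^sub>R x0 = b + (-1) *\<^sub>R a" using 1(1) 2(1) by (simp add: algebra_simps)
        have "x0 = (1/(t - s)) *\<^sub>R ((t - s) *\<^sub>R x0)" using False by simp
        then have "x0 = (1/(t - s)) *\<^sub>R (b + (-1) *\<^sub>R a)" unfolding e .
        moreover have "(1/(t - s)) *\<^sub>R (b + (-1) *\<^sub>R a) \<in> Z" using Zadd Zscale 1(3) 2(3) by blast
        ultimately show ?thesis using x0Z by simp
      qed
    qed
    moreover have "a1 \<le> 1 * norm w" if h: "(w,a1)\<in>H0" for w a1
    proof -
      obtain a t where 1: "w = a + t *\<^sub>R x0" "a1 = t * r" "a \<in> Z" using h unfolding H0_def by blast
      show ?thesis
      proof (cases "t > 0")
        case False
        then have "t * r \<le> 0" using r0 by (simp add: mult_nonpos_nonneg)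
        have "a1 \<le> norm w" using 1(2) \<open>t * r \<le> 0\<close> norm_ge_zero[of w] by linarith
        then show ?thesis by simp
      next
        case True
        have "(- (1/t)) *\<^sub>R a \<in> Z" using Zscale 1(3) by blast
        then have "r \<le> norm (x0 - (- (1/t)) *\<^sub>R a)" by (rule far)
        also have "x0 - (- (1/t)) *\<^sub>R a = (1/t) *\<^sub>R w" using 1(1) True by (simp add: algebra_simps)
        also have "norm ((1/t) *\<^sub>R w) = norm w / t" using True by simp
        finally show ?thesis using 1(2) True by (simp add: field_simps)
      qed
    qed
    ultimately obtain G :: "'a \<Rightarrow>\<^sub>L real" where G: "\<forall>w a. (w,a)\<in>H0 \<longrightarrow> blinfun_apply G w = a" "norm G \<le> 1"
      using HB_norm[of 1 H0] by auto
    have GZ: "blinfun_apply G a = 0" if "a \<in> Z" for a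
    proof -
      have "(a + 0 *\<^sub>R x0, 0 * r) \<in> H0" unfolding H0_def using that by blast
      then show ?thesis using G(1) by simp
    qed
    have Gx0: "blinfun_apply G x0 = r"
    proof -
      have "(0 + 1 *\<^sub>R x0, 1 * r) \<in> H0" unfolding H0_def using Z0 by blast
      then show ?thesis using G(1) by simp
    qed
    have Geq: "G = (\<Sum>k<n. blinfun_apply G (us k) *\<^sub>R fs k)"
    proof (rule blinfun_eqI)
      fix w
      define a where "a = w - (\<Sum>k<n. blinfun_apply (fs k) w *\<^sub>R us k)"
      have "a \<in> Z" unfolding Z_def
      proof (intro CollectI allI impI)
        fix i assume i: "i < n"
        have "(\<Sum>k<n. blinfun_apply (fs k) w * blinfun_apply (fs i) (us k)) = (\<Sum>k<n. if k = i then blinfun_apply (fs k) w else 0)"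
          by (rule sum.cong) (use bio i in auto)
        also have "\<dots> = blinfun_apply (fs i) w" using i by simp
        finally show "blinfun_apply (fs i) a = 0" unfolding a_def by (simp add: blinfun.bilinear_simps)
      qed
      then have "blinfun_apply G a = 0" by (rule GZ)
      then show "blinfun_apply G w = blinfun_apply (\<Sum>k<n. blinfun_apply G (us k) *\<^sub>R fs k) w"
        unfolding a_def by (simp add: blinfun.bilinear_simps mult.commute)
    qed
    have "blinfun_apply \<Phi> G = (\<Sum>k<n. blinfun_apply G (us k) * blinfun_apply \<Phi> (fs k))"
      by (subst Geq) (simp add: blinfun.bilinear_simps)
    also have "\<dots> = blinfun_apply G x0" unfolding x0_def by (simp add: blinfun.bilinear_simps mult.commute)
    finally have "blinfun_apply \<Phi> G = r" using Gx0 by simp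
    moreover have "blinfun_apply \<Phi> G \<le> norm \<Phi>"
    proof -
      have "blinfun_apply \<Phi> G \<le> norm \<Phi> * norm G" using norm_blinfun[of \<Phi> G] by simp
      also have "\<dots> \<le> norm \<Phi>" using G(2) by (simp add: mult_left_le)
      finally show ?thesis .
    qed
    ultimately show ?thesis using r by simp
  qed
qed

lemma james_step:
  fixes \<Phi> :: "('a::banach \<Rightarrow>\<^sub>L real) \<Rightarrow>\<^sub>L real" and xs :: "nat \<Rightarrow> 'a" and fs :: "nat \<Rightarrow> 'a \<Rightarrow>\<^sub>L real"
  assumes far: "\<forall>z. \<exists>f. \<bar>blinfun_apply \<Phi> f - blinfun_apply f z\<bar> > d * norm f"
    and th: "\<theta> > 0" "\<theta> < d" and r: "norm \<Phi> < r"
    and fPhi: "\<And>i. i < n \<Longrightarrow> blinfun_apply \<Phi> (fs i) = \<theta>"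
    and tri: "\<And>i k. i < n \<Longrightarrow> k < n \<Longrightarrow> blinfun_apply (fs i) (xs k) = (if i \<le> k then \<theta> else 0)"
  shows "\<exists>x f. norm x < r \<and> norm f \<le> 1 \<and> blinfun_apply \<Phi> f = \<theta> \<and> (\<forall>k<n. blinfun_apply f (xs k) = 0)
           \<and> (\<forall>i<n. blinfun_apply (fs i) x = \<theta>) \<and> blinfun_apply f x = \<theta>"
proof -
  define hs where "hs k = (1/\<theta>) *\<^sub>R (fs k - (if Suc k < n then fs (Suc k) else 0))" for k
  have bioh: "blinfun_apply (hs i) (xs k) = (if i = k then 1 else 0)" if "i < n" "k < n" for i k
  proof -
    have "blinfun_apply (hs i) (xs k) = (1/\<theta>) * (blinfun_apply (fs i) (xs k) - (if Suc i < n then blinfun_apply (fs (Suc i)) (xs k) else 0))"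
      unfolding hs_def by (simp add: blinfun.bilinear_simps)
    also have "\<dots> = (if i = k then 1 else 0)"
      using tri[OF that] tri[of "Suc i" k] that th by (cases "Suc i < n") auto
    finally show ?thesis .
  qed
  obtain f0 where f0: "norm f0 \<le> 1" "\<forall>k<n. blinfun_apply f0 (xs k) = 0" "blinfun_apply \<Phi> f0 > \<theta>"
    using step_functional[where m=n and hs=hs and xs=xs and \<Phi>=\<Phi> and d=d and \<theta>=\<theta>, OF bioh far] th by auto
  define f where "f = (\<theta> / blinfun_apply \<Phi> f0) *\<^sub>R f0"
  have Pf0: "blinfun_apply \<Phi> f0 > 0" using f0(3) th by linarith
  have fPhi': "blinfun_apply \<Phi> f = \<theta>" unfolding f_def using Pf0 by (simp add: blinfun.bilinear_simps)
  have fn: "norm f \<le> 1"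
  proof -
    have "\<theta> / blinfun_apply \<Phi> f0 \<le> 1" using f0(3) Pf0 by (simp add: field_simps)
    then have "(\<theta> / blinfun_apply \<Phi> f0) * norm f0 \<le> 1 * norm f0"
      by (rule mult_right_mono) simp
    moreover have "norm f = (\<theta> / blinfun_apply \<Phi> f0) * norm f0" unfolding f_def using Pf0 th by simp
    ultimately have "norm f \<le> 1 * norm f0" by simp
    then show ?thesis using f0(1) by simp
  qed
  have fx: "blinfun_apply f (xs k) = 0" if "k < n" for k
    unfolding f_def using f0(2) that by (simp add: blinfun.bilinear_simps)
  define us where "us k = (1/\<theta>) *\<^sub>R (xs k - (if k = 0 then 0 else xs (k - 1)))" for k
  have biou: "blinfun_apply (fs i) (us k) = (if i = k then 1 else 0)" if "i < n" "k < n" for i k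
  proof -
    have "blinfun_apply (fs i) (us k) = (1/\<theta>) * (blinfun_apply (fs i) (xs k) - (if k = 0 then 0 else blinfun_apply (fs i) (xs (k - 1))))"
      unfolding us_def by (simp add: blinfun.bilinear_simps)
    also have "\<dots> = (if i = k then 1 else 0)"
      using tri[OF that] tri[of i "k - 1"] that th by (cases "k = 0") auto
    finally show ?thesis .
  qed
  have fu: "blinfun_apply f (us k) = 0" if "k < n" for k
    unfolding us_def using fx[OF that] fx[of "k - 1"] that by (simp add: blinfun.bilinear_simps)
  have "f \<noteq> 0" using fPhi' th by auto
  then obtain w where w: "blinfun_apply f w \<noteq> 0" using blinfun_eqI[of f 0] by auto
  define un where "un = (1 / blinfun_apply f w) *\<^sub>R (w - (\<Sum>k<n. blinfun_apply (fs k) w *\<^sub>R us k))"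
  have fsun: "blinfun_apply (fs i) un = 0" if "i < n" for i
  proof -
    have "(\<Sum>k<n. blinfun_apply (fs k) w * blinfun_apply (fs i) (us k)) = (\<Sum>k<n. if k = i then blinfun_apply (fs k) w else 0)"
      by (rule sum.cong) (use biou that in auto)
    also have "\<dots> = blinfun_apply (fs i) w" using that by simp
    finally show ?thesis unfolding un_def by (simp add: blinfun.bilinear_simps)
  qed
  have fun': "blinfun_apply f un = 1"
    unfolding un_def using w fu by (simp add: blinfun.bilinear_simps)
  define us' where "us' k = (if k < n then us k else un)" for k
  define fs' where "fs' = fs(n := f)"
  have bio: "blinfun_apply (fs' i) (us' k) = (if i = k then 1 else 0)" if "i < Suc n" "k < Suc n" for i k
    using that biou fu fsun fun' unfolding us'_def fs'_def
    by (cases "i < n"; cases "k < n") auto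
  obtain x where x: "norm x < r" "\<forall>i<Suc n. blinfun_apply (fs' i) x = blinfun_apply \<Phi> (fs' i)"
    using helly[OF bio r] by blast
  have "\<forall>i<n. blinfun_apply (fs i) x = \<theta>"
  proof (intro allI impI)
    fix i assume "i < n"
    then show "blinfun_apply (fs i) x = \<theta>" using x(2)[rule_format, of i] fPhi[of i] unfolding fs'_def by simp
  qed
  moreover have "blinfun_apply f x = \<theta>" using x(2)[rule_format, of n] fPhi' unfolding fs'_def by simp
  ultimately show ?thesis using x(1) fn fPhi' fx by blast
qed



lemma james_seq:
  fixes \<Phi> :: "('a::banach \<Rightarrow>\<^sub>L real) \<Rightarrow>\<^sub>L real"
  assumes nr: "\<forall>x. \<exists>f. blinfun_apply \<Phi> f \<noteq> blinfun_apply f x"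
  shows "\<exists>\<theta> R (x::nat\<Rightarrow>'a) (f::nat \<Rightarrow> 'a \<Rightarrow>\<^sub>L real). \<theta> > 0 \<and> (\<forall>k. norm (x k) \<le> R) \<and> (\<forall>n. norm (f n) \<le> 1)
          \<and> (\<forall>n k. blinfun_apply (f n) (x k) = (if n \<le> k then \<theta> else 0))"
proof -
  obtain d where d: "d > 0" and far: "\<forall>z. \<exists>f. \<bar>blinfun_apply \<Phi> f - blinfun_apply f z\<bar> > d * norm f"
    using far_away[OF nr] by blast
  define \<theta> where "\<theta> = d/2"
  define r where "r = norm \<Phi> + 1"
  have th: "\<theta> > 0" "\<theta> < d" using d unfolding \<theta>_def by auto
  have r: "norm \<Phi> < r" unfolding r_def by simp
  define P where "P n s \<longleftrightarrow> (\<forall>k<n. norm (fst s k) < r) \<and> (\<forall>i<n. norm (snd s i) \<le> 1 \<and> blinfun_apply \<Phi> (snd s i) = \<theta>)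
      \<and> (\<forall>i<n. \<forall>k<n. blinfun_apply (snd s i) (fst s k) = (if i \<le> k then \<theta> else 0))"
    for n and s :: "(nat \<Rightarrow> 'a) \<times> (nat \<Rightarrow> 'a \<Rightarrow>\<^sub>L real)"
  define Q where "Q n s s' \<longleftrightarrow> (\<forall>k<n. fst s' k = fst s k \<and> snd s' k = snd s k)"
    for n and s s' :: "(nat \<Rightarrow> 'a) \<times> (nat \<Rightarrow> 'a \<Rightarrow>\<^sub>L real)"
  have P0: "\<exists>s. P 0 s" unfolding P_def by simp
  have PS: "\<exists>s'. P (Suc n) s' \<and> Q n s s'" if Ps: "P n s" for n s
  proof -
    obtain xs fs where s: "s = (xs, fs)" by (cases s)
    have fPhi: "\<And>i. i < n \<Longrightarrow> blinfun_apply \<Phi> (fs i) = \<theta>" using Ps unfolding P_def s by auto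
    have tri: "\<And>i k. i < n \<Longrightarrow> k < n \<Longrightarrow> blinfun_apply (fs i) (xs k) = (if i \<le> k then \<theta> else 0)"
      using Ps unfolding P_def s by auto
    obtain x f where xf: "norm x < r" "norm f \<le> 1" "blinfun_apply \<Phi> f = \<theta>" "\<forall>k<n. blinfun_apply f (xs k) = 0"
      "\<forall>i<n. blinfun_apply (fs i) x = \<theta>" "blinfun_apply f x = \<theta>"
      using james_step[OF far th r fPhi tri] by blast
    define s' where "s' = (xs(n := x), fs(n := f))"
    have "P (Suc n) s'" unfolding P_def s'_def
      using Ps xf unfolding P_def s by (auto simp: less_Suc_eq)
    moreover have "Q n s s'" unfolding Q_def s'_def s by auto
    ultimately show ?thesis by blast
  qed
  obtain S where S: "\<And>n. P n (S n)" "\<And>n. Q n (S n) (S (Suc n))"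
    using dependent_nat_choice[of P Q, OF P0 PS] by blast
  have stable: "fst (S m) k = fst (S (Suc k)) k \<and> snd (S m) k = snd (S (Suc k)) k" if "k < m" for k m
    using that
  proof (induction m)
    case 0 then show ?case by simp
  next
    case (Suc m)
    show ?case
    proof (cases "k = m")
      case True then show ?thesis by simp
    next
      case False
      then have "k < m" using Suc.prems by simp
      then show ?thesis using Suc.IH S(2)[of m] unfolding Q_def by auto
    qed
  qed
  define X where "X k = fst (S (Suc k)) k" for k
  define F where "F i = snd (S (Suc i)) i" for i
  have "\<forall>k. norm (X k) \<le> r" using S(1) unfolding X_def P_def by (auto intro: less_imp_le)
  moreover have "\<forall>n. norm (F n) \<le> 1" using S(1) unfolding F_def P_def by auto
  moreover have "\<forall>n k. blinfun_apply (F n) (X k) = (if n \<le> k then \<theta> else 0)"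
  proof (intro allI)
    fix n k
    define m where "m = Suc (max n k)"
    have "n < m" "k < m" unfolding m_def by auto
    have e1: "X k = fst (S m) k" unfolding X_def using stable[OF \<open>k < m\<close>] by (rule conjunct1[THEN sym])
    have e2: "F n = snd (S m) n" unfolding F_def using stable[OF \<open>n < m\<close>] by (rule conjunct2[THEN sym])
    have "\<forall>i<m. \<forall>k<m. blinfun_apply (snd (S m) i) (fst (S m) k) = (if i \<le> k then \<theta> else 0)"
      using S(1)[of m] unfolding P_def by blast
    then show "blinfun_apply (F n) (X k) = (if n \<le> k then \<theta> else 0)"
      unfolding e1 e2 using \<open>n < m\<close> \<open>k < m\<close> by blast
  qed
  ultimately show ?thesis using th by blast
qed

theorem lemma2:
  assumes "\<not> reflexive_space TYPE('a::banach)"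
  shows "\<exists>C :: ('a \<times> real) set. C \<noteq> {} \<and> maxbounded C \<and> convex C \<and>
           (\<forall>x::'a. maxdist (x, 0) C > 0) \<and>
           (\<forall>\<epsilon>>0. \<exists>M :: 'a set. M \<noteq> {} \<and> bounded M \<and> diameter M < \<epsilon> \<and>
                 Inf ((\<lambda>x. maxdist (x, 0) C) ` M) = 0)"
proof -
  obtain \<Phi> :: "('a \<Rightarrow>\<^sub>L real) \<Rightarrow>\<^sub>L real" where nr: "\<forall>x. \<exists>f. blinfun_apply \<Phi> f \<noteq> blinfun_apply f x"
    using assms unfolding reflexive_space_def by blast
  obtain \<theta> R and x :: "nat \<Rightarrow> 'a" and f :: "nat \<Rightarrow> 'a \<Rightarrow>\<^sub>L real" where
    "\<theta> > 0" "\<forall>k. norm (x k) \<le> R" "\<forall>n. norm (f n) \<le> 1"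
    "\<forall>n k. blinfun_apply (f n) (x k) = (if n \<le> k then \<theta> else 0)"
    using james_seq[OF nr] by blast
  then show ?thesis using construct[of \<theta> x R f] by blast
qed

end
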